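(* Let $X$ be a real Hilbert space, let $m\ge1$ be an integer, $I=\{1,\dots,m\}$, let $(R_i)_{i\in I}$ be operators $X\to X$ and $\beta_i>0$ such that each $R_i$ is $\tfrac1{\beta_i}$-cocoercive. Set $R=R_m\cdots R_1$. Then there exists a nonexpansive $N\colon X\to X$ such that $$R=\beta_m\cdots\beta_1\Big(\tfrac1{1+m}\mathrm{Id}+\tfrac m{1+m}N\Big).$$
   Context: For $\beta>0$, $T\colon X\to X$ is $\tfrac1\beta$-cocoercive if $T=\tfrac\beta2(\mathrm{Id}+N)$ for some nonexpansive ($1$-Lipschitz) $N\colon X\to X$. *)

theory Defs
  imports "HOL-Analysis.Analysis"
begin

definition nonexpansive :: "('a::real_normed_vector \<Rightarrow> 'a) \<Rightarrow> bool" where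
  "nonexpansive N \<longleftrightarrow> (\<forall>x y. norm (N x - N y) \<le> norm (x - y))"

definition cocoercive :: "real \<Rightarrow> ('a::real_normed_vector \<Rightarrow> 'a) \<Rightarrow> bool" where
  "cocoercive \<beta> T \<longleftrightarrow> \<beta> > 0 \<and> (\<exists>N. nonexpansive N \<and> T = (\<lambda>x. (\<beta> / 2) *\<^sub>R (x + N x)))"

fun comp_ops :: "(nat \<Rightarrow> 'a \<Rightarrow> 'a) \<Rightarrow> nat \<Rightarrow> 'a \<Rightarrow> 'a" where
  "comp_ops R 0 = id"
| "comp_ops R (Suc k) = R (Suc k) \<circ> comp_ops R k"

end

theory Submission imports Defs begin
definition avg :: "real \<Rightarrow> ('a::real_inner \<Rightarrow> 'a) \<Rightarrow> bool" where
"avg \<kappa> T \<longleftrightarrow> (\<forall>x y. norm (T x - T y)^2 + \<kappa> * norm ((x - y) - (T x - T y))^2 \<le> norm (x - y)^2)"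

lemma nsq_add: "norm (a + b)^2 = norm a^2 + 2 * inner a b + norm (b::'a::real_inner)^2"
  by (simp add: power2_norm_eq_inner inner_add inner_commute)
lemma nsq_diff: "norm (a - b)^2 = norm a^2 - 2 * inner a b + norm (b::'a::real_inner)^2"
  by (simp add: power2_norm_eq_inner inner_diff inner_commute)

lemma key: assumes k: "(k::real) > 0" shows "norm (p+q)^2/(k+1) \<le> norm p^2/k + norm (q::'a::real_inner)^2"
proof -
  have h: "0 \<le> norm (p - k *\<^sub>R q)^2" by simp
  have "norm (p - k *\<^sub>R q)^2 = norm p^2 - 2*k*inner p q + k^2 * norm q^2"
    by (simp add: nsq_diff power_mult_distrib)
  with h have h2: "0 \<le> norm p^2 - 2*k*inner p q + k^2 * norm q^2" by simp
  have "norm (p+q)^2 * k \<le> (norm p^2 + k * norm q^2) * (k+1)"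
    unfolding nsq_add using h2 k by (simp add: algebra_simps power2_eq_square)
  then show ?thesis using k by (simp add: field_simps)
qed

lemma comp_avg: assumes k: "(k::real) > 0" and G: "avg (1/k) G" and H: "avg 1 H"
  shows "avg (1/(k+1)) (H \<circ> G)"
  unfolding avg_def
proof (intro allI)
  fix x y :: 'a
  define u where "u = x - y"
  define v where "v = G x - G y"
  define w where "w = H (G x) - H (G y)"
  have 1: "norm v^2 + 1/k * norm (u - v)^2 \<le> norm u^2" using G unfolding avg_def u_def v_def by blast
  have 2: "norm w^2 + norm (v - w)^2 \<le> norm v^2" using H unfolding avg_def v_def w_def
    by (metis mult_1)
  have 3: "norm ((u-v)+(v-w))^2/(k+1) \<le> norm (u-v)^2/k + norm (v-w)^2" by (rule key[OF k])
  have "(u-v)+(v-w) = u - w" by simp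
  with 1 2 3 have "norm w^2 + 1/(k+1) * norm (u-w)^2 \<le> norm u^2" by simp
  then show "norm ((H \<circ> G) x - (H \<circ> G) y)^2 + 1/(k+1) * norm ((x - y) - ((H \<circ> G) x - (H \<circ> G) y))^2 \<le> norm (x - y)^2"
    unfolding u_def w_def by simp
qed

lemma half: "norm ((1/2) *\<^sub>R v)^2 = norm (v::'a::real_inner)^2 / 4"
  by (simp add: power_divide)

lemma firm: assumes "nonexpansive N" shows "avg 1 (\<lambda>y. (1/2) *\<^sub>R (y + N y))"
  unfolding avg_def
proof (intro allI)
  fix x y :: 'a
  define d where "d = x - y"
  define e where "e = N x - N y"
  have ne: "norm e \<le> norm d" using assms unfolding nonexpansive_def d_def e_def by blast
  have ne2: "norm e^2 \<le> norm d^2" using ne by (simp add: power_mono)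
  have a: "(1/2) *\<^sub>R (x + N x) - (1/2) *\<^sub>R (y + N y) = (1/2) *\<^sub>R (d + e)"
    unfolding d_def e_def by (simp add: algebra_simps)
  have dd: "d = (1/2) *\<^sub>R d + (1/2) *\<^sub>R d" by (simp flip: scaleR_add_left)
  have b: "d - (1/2) *\<^sub>R (d + e) = (1/2) *\<^sub>R (d - e)"
    by (subst (1) dd) (simp add: scaleR_diff_right scaleR_add_right)
  have eq: "norm ((1/2) *\<^sub>R (d + e))^2 + 1 * norm ((1/2) *\<^sub>R (d - e))^2 = (norm d^2 + norm e^2)/2"
    by (simp only: half nsq_add nsq_diff) (simp add: field_simps)
  show "norm ((1/2) *\<^sub>R (x + N x) - (1/2) *\<^sub>R (y + N y))^2 + 1 * norm ((x - y) - ((1/2) *\<^sub>R (x + N x) - (1/2) *\<^sub>R (y + N y)))^2 \<le> norm (x - y)^2"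
    unfolding d_def[symmetric] a b eq using ne2 by simp
qed

lemma scale_avg: assumes F: "avg \<kappa> F" and c: "(c::real) > 0"
  shows "avg \<kappa> (\<lambda>y. (1/c) *\<^sub>R F (c *\<^sub>R y))"
  unfolding avg_def
proof (intro allI)
  fix x y :: 'a
  have h: "norm (F (c *\<^sub>R x) - F (c *\<^sub>R y))^2 + \<kappa> * norm ((c *\<^sub>R x - c *\<^sub>R y) - (F (c *\<^sub>R x) - F (c *\<^sub>R y)))^2 \<le> norm (c *\<^sub>R x - c *\<^sub>R y)^2"
    using F unfolding avg_def by blast
  define A where "A = F (c *\<^sub>R x) - F (c *\<^sub>R y)"
  define D where "D = c *\<^sub>R x - c *\<^sub>R y"
  have e1: "(1/c) *\<^sub>R F (c *\<^sub>R x) - (1/c) *\<^sub>R F (c *\<^sub>R y) = (1/c) *\<^sub>R A"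
    unfolding A_def by (simp add: scaleR_diff_right)
  have e3: "x - y = (1/c) *\<^sub>R D" using c unfolding D_def by (simp add: scaleR_diff_right)
  have e2: "(x - y) - (1/c) *\<^sub>R A = (1/c) *\<^sub>R (D - A)"
    unfolding e3 by (simp add: scaleR_diff_right)
  have n1: "norm ((1/c) *\<^sub>R A)^2 = (1/c)^2 * norm A^2" using c by (simp add: power_divide)
  have n2: "norm ((1/c) *\<^sub>R (D - A))^2 = (1/c)^2 * norm (D - A)^2" using c by (simp add: power_divide)
  have n3: "norm ((1/c) *\<^sub>R D)^2 = (1/c)^2 * norm D^2" using c by (simp add: power_divide)
  have h': "norm A^2 + \<kappa> * norm (D - A)^2 \<le> norm D^2" using h unfolding A_def D_def .
  have "(1/c)^2 * (norm A^2 + \<kappa> * norm (D - A)^2) \<le> (1/c)^2 * norm D^2"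
    using h' by (intro mult_left_mono) auto
  then show "norm ((1/c) *\<^sub>R F (c *\<^sub>R x) - (1/c) *\<^sub>R F (c *\<^sub>R y))^2 + \<kappa> * norm ((x - y) - ((1/c) *\<^sub>R F (c *\<^sub>R x) - (1/c) *\<^sub>R F (c *\<^sub>R y)))^2 \<le> norm (x - y)^2"
    unfolding e1 e2 n1 n2 by (subst e3, unfold n3) (simp add: algebra_simps)
qed

lemma final: assumes G: "avg (1/m) G" and m: "(m::real) > 0"
  shows "nonexpansive (\<lambda>x. ((m+1)/m) *\<^sub>R G x - (1/m) *\<^sub>R x)"
  unfolding nonexpansive_def
proof (intro allI)
  fix x y :: 'a
  define d where "d = x - y"
  define g where "g = G x - G y"
  have h: "norm g^2 + 1/m * norm (d - g)^2 \<le> norm d^2" using G unfolding avg_def d_def g_def by blast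
  define A where "A = norm g^2"
  define B where "B = norm d^2"
  define C where "C = inner g d"
  have hh: "A + 1/m * (B - 2*C + A) \<le> B" using h unfolding nsq_diff A_def B_def C_def
    by (simp add: inner_commute)
  have h1: "m*A + A - 2*C + B \<le> m*B"
  proof -
    have "m * (A + 1/m * (B - 2*C + A)) \<le> m * B" using hh m by (intro mult_left_mono) auto
    moreover have "m * (1/m * (B - 2*C + A)) = B - 2*C + A" using m by simp
    ultimately show ?thesis by (simp add: distrib_left)
  qed
  have "(m+1) * (m*A + A - 2*C + B - m*B) \<le> (m+1) * 0" using h1 m by (intro mult_left_mono) auto
  then have h': "(m+1)^2 * norm g^2 - 2*(m+1)*inner g d + norm d^2 \<le> m^2 * norm d^2"
    unfolding A_def[symmetric] B_def[symmetric] C_def[symmetric] by (simp add: algebra_simps power2_eq_square)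
  have e: "((m+1)/m) *\<^sub>R G x - (1/m) *\<^sub>R x - (((m+1)/m) *\<^sub>R G y - (1/m) *\<^sub>R y) = (1/m) *\<^sub>R ((m+1) *\<^sub>R g - d)"
  proof -
    have "((m+1)/m) *\<^sub>R G x - (1/m) *\<^sub>R x - (((m+1)/m) *\<^sub>R G y - (1/m) *\<^sub>R y)
       = ((m+1)/m) *\<^sub>R g - (1/m) *\<^sub>R d" unfolding g_def d_def
      by (simp only: scaleR_diff_right) (simp add: algebra_simps)
    also have "\<dots> = (1/m) *\<^sub>R ((m+1) *\<^sub>R g - d)" by (simp add: scaleR_diff_right)
    finally show ?thesis .
  qed
  have "norm ((m+1) *\<^sub>R g - d)^2 = (m+1)^2 * norm g^2 - 2*(m+1)*inner g d + norm d^2"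
    by (simp add: nsq_diff power_mult_distrib)
  with h' have "norm ((m+1) *\<^sub>R g - d)^2 \<le> (m * norm d)^2" by (simp add: power_mult_distrib)
  then have "norm ((m+1) *\<^sub>R g - d) \<le> m * norm d" by (rule power2_le_imp_le) (use m in simp)
  moreover have "norm ((1/m) *\<^sub>R ((m+1) *\<^sub>R g - d)) = norm ((m+1) *\<^sub>R g - d) / m"
    using m by simp
  ultimately have "norm ((1/m) *\<^sub>R ((m+1) *\<^sub>R g - d)) \<le> norm d"
    using m by (simp add: divide_le_eq mult.commute)
  then show "norm (((m+1)/m) *\<^sub>R G x - (1/m) *\<^sub>R x - (((m+1)/m) *\<^sub>R G y - (1/m) *\<^sub>R y)) \<le> norm (x - y)"
    unfolding e d_def[symmetric] .
qed

lemma main_ind: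
  fixes R :: "nat \<Rightarrow> 'a::real_inner \<Rightarrow> 'a" and \<beta> :: "nat \<Rightarrow> real"
  assumes bp: "\<And>i. i \<in> {1..m} \<Longrightarrow> \<beta> i > 0"
    and co: "\<And>i. i \<in> {1..m} \<Longrightarrow> cocoercive (\<beta> i) (R i)"
  shows "k \<ge> 1 \<Longrightarrow> k \<le> m \<Longrightarrow> \<exists>G. avg (1/real k) G \<and> comp_ops R k = (\<lambda>x. (\<Prod>i\<in>{1..k}. \<beta> i) *\<^sub>R G x)"
proof (induction k)
  case 0 then show ?case by simp
next
  case (Suc k)
  have sk: "Suc k \<in> {1..m}" using Suc.prems by simp
  obtain N where N: "nonexpansive N" and RN: "R (Suc k) = (\<lambda>x. (\<beta> (Suc k) / 2) *\<^sub>R (x + N x))"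
    using co[OF sk] unfolding cocoercive_def by blast
  define F where "F = (\<lambda>y. (1/2) *\<^sub>R (y + N y))"
  have Fa: "avg 1 F" unfolding F_def by (rule firm[OF N])
  have RF: "R (Suc k) x = \<beta> (Suc k) *\<^sub>R F x" for x unfolding RN F_def by simp
  show ?case
  proof (cases "k = 0")
    case True
    have "comp_ops R (Suc k) = (\<lambda>x. (\<Prod>i\<in>{1..Suc k}. \<beta> i) *\<^sub>R F x)"
      by (simp add: fun_eq_iff RF[unfolded True] True)
    with Fa True show ?thesis by auto
  next
    case False
    then obtain G where G: "avg (1/real k) G" and CG: "comp_ops R k = (\<lambda>x. (\<Prod>i\<in>{1..k}. \<beta> i) *\<^sub>R G x)"
      using Suc.IH Suc.prems by auto
    define c where "c = (\<Prod>i\<in>{1..k}. \<beta> i)"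
    have c: "c > 0" unfolding c_def using bp Suc.prems by (intro prod_pos) auto
    define H where "H = (\<lambda>y. (1/c) *\<^sub>R F (c *\<^sub>R y))"
    have Ha: "avg 1 H" unfolding H_def by (rule scale_avg[OF Fa c])
    have kp: "real k > 0" using False by simp
    have "avg (1/(real k + 1)) (H \<circ> G)" by (rule comp_avg[OF kp G Ha])
    then have A: "avg (1/real (Suc k)) (H \<circ> G)" by (simp add: add.commute)
    have P: "(\<Prod>i\<in>{1..Suc k}. \<beta> i) = c * \<beta> (Suc k)" unfolding c_def by (simp add: prod.cl_ivl_Suc)
    have "comp_ops R (Suc k) = (\<lambda>x. (\<Prod>i\<in>{1..Suc k}. \<beta> i) *\<^sub>R (H \<circ> G) x)"
    proof
      fix x
      have "comp_ops R (Suc k) x = \<beta> (Suc k) *\<^sub>R F (c *\<^sub>R G x)" by (simp add: CG RF c_def)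
      also have "\<dots> = (c * \<beta> (Suc k)) *\<^sub>R ((1/c) *\<^sub>R F (c *\<^sub>R G x))" using c by simp
      finally show "comp_ops R (Suc k) x = (\<Prod>i\<in>{1..Suc k}. \<beta> i) *\<^sub>R (H \<circ> G) x"
        unfolding P H_def by simp
    qed
    with A show ?thesis by blast
  qed
qed

theorem mainTheorem11:
  fixes R :: "nat \<Rightarrow> 'a::{real_inner, complete_space} \<Rightarrow> 'a"
    and \<beta> :: "nat \<Rightarrow> real"
    and m :: nat
  assumes "m \<ge> 1"
    and "\<And>i. i \<in> {1..m} \<Longrightarrow> \<beta> i > 0"
    and "\<And>i. i \<in> {1..m} \<Longrightarrow> cocoercive (\<beta> i) (R i)"
  shows "\<exists>N. nonexpansive N \<and>
           comp_ops R m = (\<lambda>x. (\<Prod>i\<in>{1..m}. \<beta> i) *\<^sub>R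
              ((1 / (1 + real m)) *\<^sub>R x + (real m / (1 + real m)) *\<^sub>R N x))"
proof -
  have "\<exists>G. avg (1/real m) G \<and> comp_ops R m = (\<lambda>x. (\<Prod>i\<in>{1..m}. \<beta> i) *\<^sub>R G x)"
    using main_ind[where k=m and m=m and R=R and \<beta>=\<beta>] assms by blast
  then obtain G where G: "avg (1/real m) G" and CG: "comp_ops R m = (\<lambda>x. (\<Prod>i\<in>{1..m}. \<beta> i) *\<^sub>R G x)"
    by blast
  have mp: "real m > 0" using assms(1) by simp
  define N where "N = (\<lambda>x. ((real m+1)/real m) *\<^sub>R G x - (1/real m) *\<^sub>R x)"
  have "nonexpansive N" unfolding N_def by (rule final[OF G mp])
  moreover have "G x = (1 / (1 + real m)) *\<^sub>R x + (real m / (1 + real m)) *\<^sub>R N x" for x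
  proof -
    have "(real m / (1 + real m)) *\<^sub>R N x = G x - (1 / (1 + real m)) *\<^sub>R x"
    proof -
      have nz: "real m + real m * real m \<noteq> 0" using mp by (metis add_pos_pos less_irrefl mult_pos_pos)
      show ?thesis unfolding N_def using mp nz by (simp add: scaleR_diff_right field_simps)
    qed
    then show ?thesis by simp
  qed
  ultimately show ?thesis unfolding CG by auto
qed
end
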